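(* Let $d\in\mathbb{N}$ and let $A$ be a $d\times d$ reclusive matrix. Then the partition graph of the reclusive partition $\mathcal{P}_{A}$ can be properly $(d+1)$-colored; i.e., there is a map $c:\mathcal{P}_A\to\{0,1,\dots,d\}$ such that $c(X)\ne c(Y)$ whenever $X\neq Y$ are adjacent members of $\mathcal{P}_A$.
   Context: A $d\times d$ matrix $A=(a_{ij})$ is reclusive if $a_{ij}=0$ for $i>j$, $a_{ii}=1$ for all $i$, and $a_{ij}>a_{ik}>0$ for all $i\le j<k$. Its reclusive partition is $\mathcal{P}_A=\{A\vec{v}+[0,1)^d:\vec{v}\in\mathbb{Z}^d\}$, a partition of $\mathbb{R}^d$. Two members $X,Y$ are adjacent if $\overline{X}\cap\overline{Y}\neq\emptyset$ (closures). The partition graph has vertex set $\mathcal{P}_A$ and an edge between adjacent members. *)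

theory Defs
  imports "HOL-Analysis.Analysis"
begin

text \<open>Coordinates of R^d are indexed by a finite linearly ordered type 'n
 (isomorphic to {1..d}, d = CARD('n)); entries of A are A $ i $ j.\<close>

definition reclusive :: "real ^ ('n::{finite,linorder}) ^ ('n::{finite,linorder}) \<Rightarrow> bool" where
  "reclusive A \<longleftrightarrow>
     (\<forall>i j. i > j \<longrightarrow> A $ i $ j = 0) \<and>
     (\<forall>i. A $ i $ i = 1) \<and>
     (\<forall>i j k. i \<le> j \<and> j < k \<longrightarrow> A $ i $ j > A $ i $ k \<and> A $ i $ k > 0)"

definition unit_cube :: "(real ^ 'n) set" where
  "unit_cube = {x. \<forall>i. 0 \<le> x $ i \<and> x $ i < 1}"

definition int_vecs :: "(real ^ 'n) set" where
  "int_vecs = {v. \<forall>i. v $ i \<in> \<int>}"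

definition reclusive_partition :: "real ^ 'n ^ 'n \<Rightarrow> (real ^ 'n) set set" where
  "reclusive_partition A = {(\<lambda>x. A *v v + x) ` unit_cube | v. v \<in> int_vecs}"

definition adjacent :: "(real ^ 'n) set \<Rightarrow> (real ^ 'n) set \<Rightarrow> bool" where
  "adjacent X Y \<longleftrightarrow> closure X \<inter> closure Y \<noteq> {}"

end

theory Submission
  imports Defs
begin

lemma abel:
  fixes b :: "nat \<Rightarrow> real" and S :: "nat \<Rightarrow> real"
  assumes "k < d"
  shows "(\<Sum>l\<in>{k..<d}. b l * (S l - S (Suc l))) =
         b k * S k - (\<Sum>l\<in>{Suc k..<d}. (b (l-1) - b l) * S l) - b (d-1) * S d"
  using assms
proof (induction d)
  case 0 then show ?case by simp
next
  case (Suc d)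
  show ?case
  proof (cases "k = d")
    case True then show ?thesis by (simp add: algebra_simps)
  next
    case False
    then have "k < d" using Suc by simp
    then have IH: "(\<Sum>l\<in>{k..<d}. b l * (S l - S (Suc l))) =
         b k * S k - (\<Sum>l\<in>{Suc k..<d}. (b (l-1) - b l) * S l) - b (d-1) * S d" using Suc by simp
    have "(\<Sum>l\<in>{k..<Suc d}. b l * (S l - S (Suc l))) = (\<Sum>l\<in>{k..<d}. b l * (S l - S (Suc l))) + b d * (S d - S (Suc d))"
      using \<open>k<d\<close> by simp
    moreover have "(\<Sum>l\<in>{Suc k..<Suc d}. (b (l-1) - b l) * S l) = (\<Sum>l\<in>{Suc k..<d}. (b (l-1) - b l) * S l) + (b (d-1) - b d) * S d"
      using \<open>k<d\<close> by simp
    ultimately show ?thesis using IH \<open>k<d\<close> by (simp add: algebra_simps)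
  qed
qed

lemma telescope:
  fixes b :: "nat \<Rightarrow> real"
  assumes "k < d"
  shows "(\<Sum>l\<in>{Suc k..<d}. (b (l-1) - b l)) = b k - b (d-1)"
  using assms
proof (induction d)
  case 0 then show ?case by simp
next
  case (Suc d)
  show ?case
  proof (cases "k = d")
    case True then show ?thesis by simp
  next
    case False
    then have "k < d" using Suc by simp
    then show ?thesis using Suc by simp
  qed
qed

lemma key_nat:
  fixes B :: "nat \<Rightarrow> nat \<Rightarrow> real" and x :: "nat \<Rightarrow> int"
  assumes diag: "\<And>k. k < d \<Longrightarrow> B k k = 1"
    and dec: "\<And>k l l'. k \<le> l \<Longrightarrow> l < l' \<Longrightarrow> l' < d \<Longrightarrow> B k l > B k l' \<and> B k l' > 0"
    and row: "\<And>k. k < d \<Longrightarrow> \<bar>\<Sum>l\<in>{k..<d}. B k l * x l\<bar> \<le> 1"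
  defines "S \<equiv> \<lambda>m. \<Sum>l\<in>{m..<d}. x l"
  shows "k \<le> d \<Longrightarrow> (\<forall>m\<in>{k..<d}. S m = 0) \<or>
     ((\<forall>m\<in>{k..<d}. S m \<in> {0,1}) \<and> (\<exists>m\<in>{k..<d}. S m = 1)) \<or>
     ((\<forall>m\<in>{k..<d}. S m \<in> {0,-1}) \<and> (\<exists>m\<in>{k..<d}. S m = -1))"
proof (induction "d - k" arbitrary: k)
  case 0 then show ?case by simp
next
  case (Suc n)
  have kd: "k < d" using Suc by simp
  have IH: "(\<forall>m\<in>{Suc k..<d}. S m = 0) \<or>
     ((\<forall>m\<in>{Suc k..<d}. S m \<in> {0,1}) \<and> (\<exists>m\<in>{Suc k..<d}. S m = 1)) \<or>
     ((\<forall>m\<in>{Suc k..<d}. S m \<in> {0,-1}) \<and> (\<exists>m\<in>{Suc k..<d}. S m = -1))"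
    using Suc by simp
  have Sd: "S d = 0" unfolding S_def by simp
  have xS: "real_of_int (x l) = real_of_int (S l) - real_of_int (S (Suc l))" if "l < d" for l
    using that unfolding S_def by (simp add: sum.atLeast_Suc_lessThan)
  define c where "c = (\<lambda>l. B k (l-1) - B k l)"
  define T where "T = (\<Sum>l\<in>{Suc k..<d}. c l * real_of_int (S l))"
  have "(\<Sum>l\<in>{k..<d}. B k l * real_of_int (x l)) = (\<Sum>l\<in>{k..<d}. B k l * (real_of_int (S l) - real_of_int (S (Suc l))))"
    by (rule sum.cong) (auto simp: xS)
  also have "\<dots> = B k k * real_of_int (S k) - T - B k (d-1) * real_of_int (S d)"
    unfolding T_def c_def by (rule abel[OF kd])
  also have "\<dots> = real_of_int (S k) - T" using diag[OF kd] Sd by simp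
  finally have r: "\<bar>real_of_int (S k) - T\<bar> \<le> 1" using row[OF kd] by simp
  have cpos: "c l > 0" if "l \<in> {Suc k..<d}" for l
    using dec[of k "l-1" l] that unfolding c_def by auto
  have csum: "(\<Sum>l\<in>{Suc k..<d}. c l) < 1"
  proof (cases "Suc k < d")
    case True
    have "(\<Sum>l\<in>{Suc k..<d}. c l) = B k k - B k (d-1)" unfolding c_def by (rule telescope[OF kd])
    moreover have "B k (d-1) > 0" using dec[of k k "d-1"] True by auto
    ultimately show ?thesis using diag[OF kd] by simp
  next
    case False then show ?thesis by simp
  qed
  have kspl: "{k..<d} = insert k {Suc k..<d}" using kd by auto
  from IH show ?case
  proof (elim disjE conjE)
    assume z: "\<forall>m\<in>{Suc k..<d}. S m = 0"
    then have "T = 0" unfolding T_def by simp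
    then have "S k \<in> {-1,0,1}" using r by (auto simp: abs_le_iff)
    then consider "S k = 0" | "S k = 1" | "S k = -1" by blast
    then show ?thesis
    proof cases
      case 1 then show ?thesis unfolding kspl using z by simp
    next
      case 2 then show ?thesis unfolding kspl using z by simp
    next
      case 3 then show ?thesis unfolding kspl using z by simp
    qed
  next
    assume a: "\<forall>m\<in>{Suc k..<d}. S m \<in> {0, 1}" and b: "\<exists>m\<in>{Suc k..<d}. S m = 1"
    from b obtain m where m: "m \<in> {Suc k..<d}" "S m = 1" by blast
    have "T \<ge> c m * real_of_int (S m)" unfolding T_def
      by (rule member_le_sum[OF m(1)]) (use a cpos in \<open>fastforce intro: less_imp_le\<close>)+
    then have T0: "T > 0" using m cpos[OF m(1)] by simp
    have "T \<le> (\<Sum>l\<in>{Suc k..<d}. c l)" unfolding T_def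
      by (rule sum_mono) (use a cpos in \<open>fastforce\<close>)
    then have "T < 1" using csum by simp
    then have "real_of_int (S k) < 2" "real_of_int (S k) > -1" using r T0 unfolding abs_le_iff by linarith+
    then have "S k < 2" "S k > -1" by simp_all
    then have "S k \<in> {0,1}" by auto
    then have "\<forall>m\<in>{k..<d}. S m \<in> {0,1}" unfolding kspl using a by simp
    moreover have "\<exists>m\<in>{k..<d}. S m = 1" using m by auto
    ultimately show ?thesis by blast
  next
    assume a: "\<forall>m\<in>{Suc k..<d}. S m \<in> {0, -1}" and b: "\<exists>m\<in>{Suc k..<d}. S m = -1"
    from b obtain m where m: "m \<in> {Suc k..<d}" "S m = -1" by blast
    have mT: "-T = (\<Sum>l\<in>{Suc k..<d}. c l * (- real_of_int (S l)))" unfolding T_def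
      by (simp add: sum_negf)
    have "(\<Sum>l\<in>{Suc k..<d}. c l * (- real_of_int (S l))) \<ge> c m * (- real_of_int (S m))"
      by (rule member_le_sum[OF m(1)]) (use a cpos in \<open>fastforce intro: less_imp_le\<close>)+
    then have T0: "T < 0" using m cpos[OF m(1)] mT by simp
    have "(\<Sum>l\<in>{Suc k..<d}. c l * (- real_of_int (S l))) \<le> (\<Sum>l\<in>{Suc k..<d}. c l)"
      by (rule sum_mono) (use a cpos in \<open>fastforce\<close>)
    then have "T > -1" using csum mT by simp
    then have "real_of_int (S k) < 1" "real_of_int (S k) > -2" using r T0 unfolding abs_le_iff by linarith+
    then have "S k < 1" "S k > -2" by simp_all
    then have "S k \<in> {0,-1}" by auto
    then have "\<forall>m\<in>{k..<d}. S m \<in> {0,-1}" unfolding kspl using a by simp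
    moreover have "\<exists>m\<in>{k..<d}. S m = -1" using m by auto
    ultimately show ?thesis by blast
  qed
qed

lemma enum_facts:
  defines "e \<equiv> \<lambda>k. sorted_list_of_set (UNIV::('n::{finite,linorder}) set) ! k"
  shows "bij_betw e {..<CARD('n)} (UNIV::'n set)"
    and "\<And>k l. k < l \<Longrightarrow> l < CARD('n) \<Longrightarrow> e k < e l"
proof -
  let ?xs = "sorted_list_of_set (UNIV::'n set)"
  have len: "length ?xs = CARD('n)" by simp
  show "bij_betw e {..<CARD('n)} (UNIV::'n set)" unfolding e_def
    by (rule bij_betw_nth) (auto simp: len)
  show "\<And>k l. k < l \<Longrightarrow> l < CARD('n) \<Longrightarrow> e k < e l" unfolding e_def
    using sorted_wrt_nth_less[OF strict_sorted_list_of_set] len by metis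
qed

lemma closure_tile:
  fixes A :: "real ^ 'n ^ 'n"
  shows "closure ((\<lambda>x. A *v v + x) ` unit_cube) \<subseteq> {p. \<forall>i. (A *v v) $ i \<le> p $ i \<and> p $ i \<le> (A *v v) $ i + 1}"
proof (rule closure_minimal)
  show "(\<lambda>x. A *v v + x) ` unit_cube \<subseteq> {p. \<forall>i. (A *v v) $ i \<le> p $ i \<and> p $ i \<le> (A *v v) $ i + 1}"
    unfolding unit_cube_def using less_imp_le by fastforce
  have "{p. \<forall>i. (A *v v) $ i \<le> p $ i \<and> p $ i \<le> (A *v v) $ i + 1} =
        (\<Inter>i. {p::real^'n. p $ i \<ge> (A *v v) $ i} \<inter> {p. p $ i \<le> (A *v v) $ i + 1})" by auto
  also have "closed \<dots>"
    by (intro closed_INT ballI closed_Int closed_halfspace_component_ge_cart closed_halfspace_component_le_cart)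
  finally show "closed {p. \<forall>i. (A *v v) $ i \<le> p $ i \<and> p $ i \<le> (A *v v) $ i + 1}" .
qed

theorem mainTheorem11:
  fixes A :: "real ^ ('n::{finite,linorder}) ^ ('n::{finite,linorder})"
  assumes "reclusive A"
  shows "\<exists>c :: (real ^ ('n::{finite,linorder})) set \<Rightarrow> nat.
           (\<forall>X \<in> reclusive_partition A. c X \<le> CARD('n::{finite,linorder})) \<and>
           (\<forall>X \<in> reclusive_partition A. \<forall>Y \<in> reclusive_partition A.
              X \<noteq> Y \<and> adjacent X Y \<longrightarrow> c X \<noteq> c Y)"
proof -
  define d where "d = CARD('n)"
  define e where "e = (\<lambda>k. sorted_list_of_set (UNIV::'n::{finite,linorder} set) ! k)"
  have bij: "bij_betw e {..<d} (UNIV::'n::{finite,linorder} set)" unfolding e_def d_def by (rule enum_facts)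
  have emono: "e k < e l" if "k < l" "l < d" for k l using enum_facts(2) that unfolding e_def d_def by blast
  have ele: "e k \<le> e l" if "k \<le> l" "l < d" for k l using emono[of k l] that by (cases "k = l") auto
  have esurj: "\<exists>l<d. e l = j" for j using bij unfolding bij_betw_def by (metis UNIV_I imageE lessThan_iff)
  define tile where "tile = (\<lambda>v. (\<lambda>x. A *v v + x) ` (unit_cube :: (real^'n::{finite,linorder}) set))"
  define rep where "rep = (\<lambda>X. SOME v. v \<in> int_vecs \<and> X = tile v)"
  define F where "F = (\<lambda>v::real^'n::{finite,linorder}. \<Sum>m<d. \<Sum>l\<in>{m..<d}. \<lfloor>v $ e l\<rfloor>)"
  define c where "c = (\<lambda>X. nat (F (rep X) mod int (d+1)))"
  have rep: "rep X \<in> int_vecs \<and> X = tile (rep X)" if "X \<in> reclusive_partition A" for X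
  proof -
    from that obtain v where "v \<in> int_vecs \<and> X = tile v"
      unfolding reclusive_partition_def tile_def by blast
    then show ?thesis unfolding rep_def by (rule someI)
  qed
  have A0: "A $ i $ j = 0" if "i > j" for i j using assms that unfolding reclusive_def by blast
  have A1: "A $ i $ i = 1" for i using assms unfolding reclusive_def by blast
  have A2: "A $ i $ j > A $ i $ k \<and> A $ i $ k > 0" if "i \<le> j" "j < k" for i j k
    using assms that unfolding reclusive_def by blast
  have rowsum: "(A *v u) $ e k = (\<Sum>l\<in>{k..<d}. A $ e k $ e l * u $ e l)" if "k < d" for u k
  proof -
    have "(A *v u) $ e k = (\<Sum>j\<in>UNIV. A $ e k $ j * u $ j)" by (simp add: matrix_vector_mult_def)
    also have "\<dots> = (\<Sum>l\<in>{..<d}. A $ e k $ e l * u $ e l)"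
      by (rule sum.reindex_bij_betw[OF bij, symmetric])
    also have "\<dots> = (\<Sum>l\<in>{k..<d}. A $ e k $ e l * u $ e l)"
      using that by (intro sum.mono_neutral_cong_right) (auto simp: not_le intro!: A0 emono)
    finally show ?thesis .
  qed
  have col: "c X \<noteq> c Y" if X: "X \<in> reclusive_partition A" and Y: "Y \<in> reclusive_partition A"
    and XY: "X \<noteq> Y" and adj: "adjacent X Y" for X Y
  proof -
    define v where "v = rep X"
    define w where "w = rep Y"
    have v: "v \<in> int_vecs" "X = tile v" using rep[OF X] unfolding v_def by auto
    have w: "w \<in> int_vecs" "Y = tile w" using rep[OF Y] unfolding w_def by auto
    have vw: "v \<noteq> w" using v w XY by auto
    from adj obtain p where p: "p \<in> closure X" "p \<in> closure Y" unfolding adjacent_def by blast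
    have pv: "(A *v v) $ i \<le> p $ i \<and> p $ i \<le> (A *v v) $ i + 1" for i
      using closure_tile[of A v] p(1) v(2) unfolding tile_def by blast
    have pw: "(A *v w) $ i \<le> p $ i \<and> p $ i \<le> (A *v w) $ i + 1" for i
      using closure_tile[of A w] p(2) w(2) unfolding tile_def by blast
    have bnd: "\<bar>(A *v (v - w)) $ i\<bar> \<le> 1" for i
      using pv[of i] pw[of i] by (simp add: matrix_vector_mult_diff_distrib abs_le_iff)
    define x where "x = (\<lambda>l. \<lfloor>v $ e l\<rfloor> - \<lfloor>w $ e l\<rfloor>)"
    have fl: "real_of_int \<lfloor>z $ j\<rfloor> = z $ j" if "z \<in> int_vecs" for z j
    proof -
      have "z $ j \<in> \<int>" using that unfolding int_vecs_def by blast
      then obtain n where "z $ j = of_int n" by (rule Ints_cases)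
      then show ?thesis by simp
    qed
    have xr: "real_of_int (x l) = (v - w) $ e l" for l
      unfolding x_def of_int_diff fl[OF v(1)] fl[OF w(1)] by simp
    define S where "S = (\<lambda>m. \<Sum>l\<in>{m..<d}. x l)"
    have K: "(\<forall>m\<in>{0..<d}. S m = 0) \<or>
     ((\<forall>m\<in>{0..<d}. S m \<in> {0,1}) \<and> (\<exists>m\<in>{0..<d}. S m = 1)) \<or>
     ((\<forall>m\<in>{0..<d}. S m \<in> {0,-1}) \<and> (\<exists>m\<in>{0..<d}. S m = -1))"
      unfolding S_def
    proof (rule key_nat[where B = "\<lambda>k l. A $ e k $ e l"])
      show "A $ e k $ e k = 1" for k by (rule A1)
      show "A $ e k $ e l > A $ e k $ e l' \<and> A $ e k $ e l' > 0" if "k \<le> l" "l < l'" "l' < d" for k l l'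
        using A2[of "e k" "e l" "e l'"] ele[of k l] emono[of l l'] that by simp
      show "\<bar>\<Sum>l\<in>{k..<d}. A $ e k $ e l * real_of_int (x l)\<bar> \<le> 1" if "k < d" for k
        using bnd[of "e k"] rowsum[OF that, of "v - w"] by (simp add: xr)
    qed simp
    have FS: "F v - F w = (\<Sum>m<d. S m)"
      unfolding F_def S_def x_def by (simp add: sum_subtractf)
    have "\<not> (\<forall>m\<in>{0..<d}. S m = 0)"
    proof
      assume z: "\<forall>m\<in>{0..<d}. S m = 0"
      have "x l = 0" if "l < d" for l
      proof -
        have "S l = x l + S (Suc l)" unfolding S_def using that by (simp add: sum.atLeast_Suc_lessThan)
        then show ?thesis using z that by (cases "Suc l < d") (auto simp: S_def)
      qed
      then have "v $ j = w $ j" for j using esurj[of j] xr by (metis eq_iff_diff_eq_0 of_int_0 vector_minus_component)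
      then show False using vw by (simp add: vec_eq_iff)
    qed
    then have range: "(1 \<le> F v - F w \<and> F v - F w \<le> int d) \<or> (- int d \<le> F v - F w \<and> F v - F w \<le> -1)"
    proof -
      assume nz: "\<not> (\<forall>m\<in>{0..<d}. S m = 0)"
      from K nz show ?thesis
      proof (elim disjE conjE)
        assume a: "\<forall>m\<in>{0..<d}. S m \<in> {0, 1}" and b: "\<exists>m\<in>{0..<d}. S m = 1"
        from b obtain m where m: "m < d" "S m = 1" by auto
        have a': "S j = 0 \<or> S j = 1" if "j < d" for j using a that by auto
        have "(\<Sum>m<d. S m) \<ge> S m" by (rule member_le_sum) (use a' m in \<open>force\<close>)+
        moreover have "(\<Sum>m<d. S m) \<le> (\<Sum>m<d. 1)" by (rule sum_mono) (use a' in \<open>force\<close>)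
        ultimately show ?thesis using FS m by simp
      next
        assume a: "\<forall>m\<in>{0..<d}. S m \<in> {0, -1}" and b: "\<exists>m\<in>{0..<d}. S m = -1"
        from b obtain m where m: "m < d" "S m = -1" by auto
        have a': "S j = 0 \<or> S j = -1" if "j < d" for j using a that by auto
        have "(\<Sum>m<d. - S m) \<ge> - S m" by (rule member_le_sum) (use a' m in \<open>force\<close>)+
        moreover have "(\<Sum>m<d. - S m) \<le> (\<Sum>m<d. 1)" by (rule sum_mono) (use a' in \<open>force\<close>)
        ultimately show ?thesis using FS m by (simp add: sum_negf)
      qed simp
    qed
    have "F v mod int (d+1) \<noteq> F w mod int (d+1)"
    proof
      assume "F v mod int (d+1) = F w mod int (d+1)"
      then have dv: "int (d+1) dvd (F v - F w)" by (simp add: mod_eq_dvd_iff)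
      show False
      proof (cases "F v - F w > 0")
        case True then show False using zdvd_imp_le[OF dv True] range by simp
      next
        case False
        have "int (d+1) dvd (F w - F v)" using dv by (metis dvd_diff_commute)
        moreover have "F w - F v > 0" using False range by simp
        ultimately show False using zdvd_imp_le range by fastforce
      qed
    qed
    then show ?thesis unfolding c_def v_def w_def by (simp add: eq_nat_nat_iff)
  qed
  have "c X \<le> d" for X
  proof -
    have "F (rep X) mod (1 + int d) < 1 + int d" by (rule pos_mod_bound) simp
    then have "F (rep X) mod (1 + int d) \<le> int d" by linarith
    then show ?thesis unfolding c_def nat_le_iff by simp
  qed
  then show ?thesis using col unfolding d_def by blast
qed
end
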